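(* Let $(\Omega,\mathcal{F},P)$ be a probability space and $T:\Omega\to\Omega$ a measurable transformation. Suppose there exists an upper probability $V$ on $(\Omega,\mathcal{F})$ which is $T$-invariant and ergodic with respect to $T$, with $P\in\operatorname{core}(V)$. Then there exists a unique ergodic probability $Q\in\mathcal{M}^e(T)\cap\operatorname{core}(V)$ such that for every $f\in L^1(\Omega,\mathcal{F},Q)$, $$\lim_{n\to\infty}\frac{1}{n}\sum_{i=0}^{n-1}f(T^i\omega)=\int f\,dQ\quad\text{for }P\text{-a.s. }\omega\in\Omega.$$
   Context: A capacity is a monotone map $\mu:\mathcal{F}\to[0,1]$ with $\mu(\emptyset)=0,\mu(\Omega)=1$. An upper probability is a capacity $V$ with $V(A)=\max_{P'\in\Lambda}P'(A)$ for a weak* (setwise convergence) compact set $\Lambda$ of probabilities. $V$ is $T$-invariant if $V(T^{-1}A)=V(A)$ for all $A$. $\mathcal{I}=\{A\in\mathcal{F}:T^{-1}A=A\}$. A $T$-invariant capacity $\mu$ is ergodic if for each $B\in\mathcal{I}$, $\mu(B)\in\{0,1\}$ and ($\mu(B)=0$ or $\mu(\Omega\setminus B)=0$). $\operatorname{core}(V)$ is the set of finitely additive normalized set functions dominated by $V$. $\mathcal{M}^e(T)$ denotes the $T$-invariant probabilities $Q$ with $Q(\mathcal{I})\subset\{0,1\}$. $P$ itself need not be $T$-invariant. *)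

theory Defs
  imports "HOL-Probability.Probability"
begin

definition capacity :: "'a measure \<Rightarrow> ('a set \<Rightarrow> real) \<Rightarrow> bool" where
  "capacity M V \<longleftrightarrow>
     V {} = 0 \<and> V (space M) = 1 \<and>
     (\<forall>A\<in>sets M. \<forall>B\<in>sets M. A \<subseteq> B \<longrightarrow> V A \<le> V B)"

text \<open>Upper probability: V(A) = max over a set Lambda of probability measures on (Omega,F),
  Lambda nonempty and compact for the topology of setwise convergence (the product
  topology on set functions A \<mapsto> P'(A)).\<close>
definition upper_probability :: "'a measure \<Rightarrow> ('a set \<Rightarrow> real) \<Rightarrow> bool" where
  "upper_probability M V \<longleftrightarrow> capacity M V \<and>
     (\<exists>\<Lambda> :: 'a measure set.
        \<Lambda> \<noteq> {} \<and>
        (\<forall>P'\<in>\<Lambda>. prob_space P' \<and> sets P' = sets M) \<and>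
        compact ((\<lambda>P' A. measure P' A) ` \<Lambda>) \<and>
        (\<forall>A\<in>sets M. \<exists>P'\<in>\<Lambda>. V A = measure P' A \<and>
                        (\<forall>P''\<in>\<Lambda>. measure P'' A \<le> V A)))"

definition invariant_sets :: "'a measure \<Rightarrow> ('a \<Rightarrow> 'a) \<Rightarrow> 'a set set" where
  "invariant_sets M T = {A \<in> sets M. T -` A \<inter> space M = A}"

definition T_invariant_capacity :: "'a measure \<Rightarrow> ('a \<Rightarrow> 'a) \<Rightarrow> ('a set \<Rightarrow> real) \<Rightarrow> bool" where
  "T_invariant_capacity M T \<mu> \<longleftrightarrow> (\<forall>A\<in>sets M. \<mu> (T -` A \<inter> space M) = \<mu> A)"

definition ergodic_capacity :: "'a measure \<Rightarrow> ('a \<Rightarrow> 'a) \<Rightarrow> ('a set \<Rightarrow> real) \<Rightarrow> bool" where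
  "ergodic_capacity M T \<mu> \<longleftrightarrow> T_invariant_capacity M T \<mu> \<and>
     (\<forall>B\<in>invariant_sets M T. (\<mu> B = 0 \<or> \<mu> B = 1) \<and>
                               (\<mu> B = 0 \<or> \<mu> (space M - B) = 0))"

definition in_core :: "'a measure \<Rightarrow> ('a set \<Rightarrow> real) \<Rightarrow> 'a measure \<Rightarrow> bool" where
  "in_core M V Q \<longleftrightarrow> (\<forall>A\<in>sets M. measure Q A \<le> V A)"

definition ergodic_probs :: "'a measure \<Rightarrow> ('a \<Rightarrow> 'a) \<Rightarrow> 'a measure set" where
  "ergodic_probs M T = {Q. prob_space Q \<and> sets Q = sets M \<and>
     (\<forall>A\<in>sets M. measure Q (T -` A \<inter> space M) = measure Q A) \<and>
     (\<forall>B\<in>invariant_sets M T. measure Q B = 0 \<or> measure Q B = 1)}"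

end

theory Submission
  imports Defs
begin


definition bsum :: "('a \<Rightarrow> 'a) \<Rightarrow> ('a \<Rightarrow> real) \<Rightarrow> nat \<Rightarrow> 'a \<Rightarrow> real" where
  "bsum T g n \<omega> = (\<Sum>i<n. g ((T ^^ i) \<omega>))"

fun maxS :: "('a \<Rightarrow> 'a) \<Rightarrow> ('a \<Rightarrow> real) \<Rightarrow> nat \<Rightarrow> 'a \<Rightarrow> real" where
  "maxS T g 0 \<omega> = 0"
| "maxS T g (Suc N) \<omega> = max (maxS T g N \<omega>) (bsum T g (Suc N) \<omega>)"

lemma bsum_Suc: "bsum T g (Suc n) \<omega> = g \<omega> + bsum T g n (T \<omega>)"
  unfolding bsum_def sum.lessThan_Suc_shift by (simp add: funpow_Suc_right del: funpow.simps)

lemma bsum_0[simp]: "bsum T g 0 \<omega> = 0" by (simp add: bsum_def)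

lemma maxS_nonneg: "0 \<le> maxS T g N \<omega>"
  by (induction N) auto

lemma maxS_ge: "k \<le> N \<Longrightarrow> bsum T g k \<omega> \<le> maxS T g N \<omega>"
proof (induction N)
  case 0 then show ?case by simp
next
  case (Suc N) then show ?case by (cases "k = Suc N") auto
qed

lemma maxS_mono: "N \<le> N' \<Longrightarrow> maxS T g N \<omega> \<le> maxS T g N' \<omega>"
proof (induction N' )
  case 0 then show ?case by simp
next
  case (Suc N') then show ?case by (cases "N = Suc N'") force+
qed

lemma maxS_rec: "maxS T g N \<omega> \<le> max 0 (g \<omega> + maxS T g N (T \<omega>))"
proof (induction N)
  case 0 then show ?case by simp
next
  case (Suc N)
  have a: "maxS T g N (T \<omega>) \<le> maxS T g (Suc N) (T \<omega>)" by (rule maxS_mono) simp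
  have b: "bsum T g N (T \<omega>) \<le> maxS T g (Suc N) (T \<omega>)" by (rule maxS_ge) simp
  have c: "maxS T g (Suc N) \<omega> = max (maxS T g N \<omega>) (g \<omega> + bsum T g N (T \<omega>))"
    by (simp only: maxS.simps bsum_Suc)
  show ?case unfolding c using Suc a b by linarith
qed

lemma maxS_key: "maxS T g N \<omega> - maxS T g N (T \<omega>) \<le> g \<omega> * indicator {x. 0 < maxS T g N x} \<omega>"
  using maxS_rec[of T g N \<omega>] maxS_nonneg[of T g N "T \<omega>"] maxS_nonneg[of T g N \<omega>]
  by (auto simp: indicator_def)

locale mpt =
  fixes Q :: "'a measure" and T :: "'a \<Rightarrow> 'a"
  assumes prob: "prob_space Q" and Tm: "T \<in> measurable Q Q"
    and inv: "\<And>A. A \<in> sets Q \<Longrightarrow> measure Q (T -` A \<inter> space Q) = measure Q A"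
begin

interpretation prob_space Q by (rule prob)

lemma distr_eq: "distr Q Q T = Q"
proof (rule measure_eqI)
  fix A assume A: "A \<in> sets (distr Q Q T)"
  then have A': "A \<in> sets Q" by simp
  have "emeasure (distr Q Q T) A = emeasure Q (T -` A \<inter> space Q)"
    using A' Tm by (simp add: emeasure_distr)
  also have "\<dots> = emeasure Q A"
    using inv[OF A'] A' Tm by (simp add: emeasure_eq_measure measurable_sets)
  finally show "emeasure (distr Q Q T) A = emeasure Q A" .
qed simp

lemma integrable_T: "integrable Q (h::_\<Rightarrow>real) \<Longrightarrow> integrable Q (\<lambda>x. h (T x))"
  using integrable_distr_eq[OF Tm, of h] distr_eq by (simp add: borel_measurable_integrable)

lemma integral_T: "integrable Q (h::_\<Rightarrow>real) \<Longrightarrow> integral\<^sup>L Q (\<lambda>x. h (T x)) = integral\<^sup>L Q h"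
  using integral_distr[OF Tm, of h] distr_eq by (simp add: borel_measurable_integrable)

lemma integrable_Tn: "integrable Q (h::_\<Rightarrow>real) \<Longrightarrow> integrable Q (\<lambda>x. h ((T ^^ i) x))"
proof (induction i)
  case 0 then show ?case by simp
next
  case (Suc i)
  have "integrable Q (\<lambda>x. (\<lambda>y. h ((T ^^ i) y)) (T x))" by (rule integrable_T[OF Suc.IH[OF Suc.prems]])
  then show ?case by (simp add: funpow_Suc_right del: funpow.simps)
qed

lemma integrable_bsum: assumes "integrable Q g" shows "integrable Q (bsum T g n)"
  unfolding bsum_def by (rule Bochner_Integration.integrable_sum, rule integrable_Tn, rule assms)

lemma integrable_maxS: "integrable Q g \<Longrightarrow> integrable Q (maxS T g N)"
proof (induction N)
  case 0 then show ?case by simp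
next
  case (Suc N) then show ?case using integrable_bsum[of g "Suc N"] by (simp del: bsum_def)
qed

lemma maximal_ineq:
  assumes g: "integrable Q g"
  shows "0 \<le> integral\<^sup>L Q (\<lambda>x. g x * indicator {x. 0 < maxS T g N x} x)"
proof -
  have mi: "integrable Q (maxS T g N)" by (rule integrable_maxS[OF g])
  have E: "{x. 0 < maxS T g N x} \<inter> space Q \<in> sets Q"
    using borel_measurable_integrable[OF mi] by measurable
  have ii: "integrable Q (\<lambda>x. g x * indicator {x. 0 < maxS T g N x} x)"
  proof -
    have "integrable Q (\<lambda>x. g x * indicator ({x. 0 < maxS T g N x} \<inter> space Q) x)"
      by (rule integrable_real_mult_indicator[OF E g])
    moreover have "\<And>x. x \<in> space Q \<Longrightarrow> g x * indicator ({x. 0 < maxS T g N x} \<inter> space Q) x = g x * indicator {x. 0 < maxS T g N x} x"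
      by (auto simp: indicator_def)
    ultimately show ?thesis
      using Bochner_Integration.integrable_cong[OF refl, of Q "\<lambda>x. g x * indicator ({x. 0 < maxS T g N x} \<inter> space Q) x"] by simp
  qed
  have "0 = integral\<^sup>L Q (maxS T g N) - integral\<^sup>L Q (\<lambda>x. maxS T g N (T x))"
    using integral_T[OF mi] by simp
  also have "\<dots> = integral\<^sup>L Q (\<lambda>x. maxS T g N x - maxS T g N (T x))"
    using mi integrable_T[OF mi] by simp
  also have "\<dots> \<le> integral\<^sup>L Q (\<lambda>x. g x * indicator {x. 0 < maxS T g N x} x)"
    by (intro integral_mono ii maxS_key Bochner_Integration.integrable_diff mi integrable_T[OF mi])
  finally show ?thesis .
qed

lemma key:
  assumes g: "integrable Q g" and neg: "integral\<^sup>L Q g < 0"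
  shows "\<not> (AE \<omega> in Q. \<exists>n. 0 < bsum T g n \<omega>)"
proof
  assume ae: "AE \<omega> in Q. \<exists>n. 0 < bsum T g n \<omega>"
  let ?s = "\<lambda>N x. g x * indicator {x. 0 < maxS T g N x} x"
  have mi: "\<And>N. integrable Q (maxS T g N)" by (rule integrable_maxS[OF g])
  have "(\<lambda>N. integral\<^sup>L Q (?s N)) \<longlonglongrightarrow> integral\<^sup>L Q g"
  proof (rule integral_dominated_convergence[where w="\<lambda>x. norm (g x)"])
    show "g \<in> borel_measurable Q" using g by (simp add: borel_measurable_integrable)
    show "?s N \<in> borel_measurable Q" for N
      using borel_measurable_integrable[OF g] borel_measurable_integrable[OF mi[of N]] by measurable
    show "integrable Q (\<lambda>x. norm (g x))" using g by simp
    show "AE x in Q. norm (?s N x) \<le> norm (g x)" for N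
      by (auto simp: indicator_def)
    show "AE x in Q. (\<lambda>N. ?s N x) \<longlonglongrightarrow> g x"
      using ae
    proof eventually_elim
      case (elim x)
      then obtain n where n: "0 < bsum T g n x" by blast
      have "eventually (\<lambda>N. ?s N x = g x) sequentially"
      proof (rule eventually_sequentiallyI[of n])
        fix N assume "n \<le> N"
        then have "0 < maxS T g N x" using maxS_ge[of n N T g x] n by simp
        then show "?s N x = g x" by simp
      qed
      then show ?case by (rule tendsto_eventually)
    qed
  qed
  moreover have "\<forall>N. 0 \<le> integral\<^sup>L Q (?s N)" using maximal_ineq[OF g] by blast
  ultimately have "0 \<le> integral\<^sup>L Q g"
    by (intro LIMSEQ_le_const) auto
  with neg show False by simp
qed

end



lemma unb_nat_real: "(\<forall>m::nat. \<exists>n. s n > real m) \<longleftrightarrow> (\<forall>x::real. \<exists>n. s n > x)"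
proof
  assume a: "\<forall>m::nat. \<exists>n. s n > real m"
  show "\<forall>x::real. \<exists>n. s n > x"
  proof
    fix x :: real
    obtain m :: nat where "x < real m" using reals_Archimedean2 by blast
    with a show "\<exists>n. s n > x" by (meson less_trans)
  qed
qed auto

lemma unb_shift:
  "(\<forall>x::real. \<exists>n. bsum T g n \<omega> > x) \<longleftrightarrow> (\<forall>x::real. \<exists>n. bsum T g n (T \<omega>) > x)"
proof
  assume a: "\<forall>x::real. \<exists>n. bsum T g n \<omega> > x"
  show "\<forall>x::real. \<exists>n. bsum T g n (T \<omega>) > x"
  proof
    fix x :: real
    obtain n where n: "bsum T g n \<omega> > max 0 (x + g \<omega>)" using a by blast
    then have "n \<noteq> 0" by (cases n) auto
    then obtain k where k: "n = Suc k" by (cases n) auto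
    show "\<exists>n. bsum T g n (T \<omega>) > x"
      using n unfolding k bsum_Suc by (intro exI[of _ k]) linarith
  qed
next
  assume a: "\<forall>x::real. \<exists>n. bsum T g n (T \<omega>) > x"
  show "\<forall>x::real. \<exists>n. bsum T g n \<omega> > x"
  proof
    fix x :: real
    obtain n where n: "bsum T g n (T \<omega>) > x - g \<omega>" using a by blast
    show "\<exists>n. bsum T g n \<omega> > x"
      using n by (intro exI[of _ "Suc n"]) (simp add: bsum_Suc)
  qed
qed

lemma bsum_meas[measurable]:
  assumes "T \<in> measurable M M" "g \<in> borel_measurable M"
  shows "bsum T g n \<in> borel_measurable M"
  unfolding bsum_def using assms by measurable

lemma null_lemma:
  assumes PM: "prob_space M" and Tm: "T \<in> measurable M M"
    and erg: "ergodic_capacity M T V" and coreP: "in_core M V M"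
    and mpt: "mpt Q T" and sQ: "sets Q = sets M" and coreQ: "in_core M V Q"
    and g: "integrable Q g" and neg: "integral\<^sup>L Q g < 0"
  shows "AE \<omega> in M. \<omega> \<notin> {\<omega>\<in>space M. \<forall>m::nat. \<exists>n. bsum T g n \<omega> > real m}"
proof -
  interpret Q: prob_space Q using mpt mpt.prob by blast
  interpret P: prob_space M by fact
  have spQ: "space Q = space M" using sQ by (rule sets_eq_imp_space_eq)
  have gm: "g \<in> borel_measurable M"
    using borel_measurable_integrable[OF g] measurable_cong_sets[OF sQ refl] by blast
  note [measurable] = gm Tm
  define B where "B = {\<omega>\<in>space M. \<forall>m::nat. \<exists>n. bsum T g n \<omega> > real m}"
  have Bm: "B \<in> sets M" unfolding B_def by measurable
  have "T -` B \<inter> space M = B"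
  proof -
    have "\<And>\<omega>. \<omega> \<in> space M \<Longrightarrow> T \<omega> \<in> space M" using Tm by (meson measurable_space)
    then show ?thesis unfolding B_def unb_nat_real using unb_shift[of T g] by auto
  qed
  then have Binv: "B \<in> invariant_sets M T" using Bm by (simp add: invariant_sets_def)
  have "V B = 0"
  proof (rule ccontr)
    assume "V B \<noteq> 0"
    then have "V (space M - B) = 0" using erg Binv unfolding ergodic_capacity_def by blast
    moreover have "space M - B \<in> sets M" using Bm by auto
    ultimately have "measure Q (space M - B) \<le> 0" using coreQ unfolding in_core_def by metis
    then have "measure Q (space Q - B) = 0" using spQ by (simp add: measure_nonneg antisym)
    then have "measure Q B = 1" using Q.prob_compl[of B] Bm sQ by simp
    then have "AE \<omega> in Q. \<omega> \<in> B" using Bm sQ by (simp add: Q.prob_eq_1)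
    then have "AE \<omega> in Q. \<exists>n. 0 < bsum T g n \<omega>"
      by eventually_elim (auto simp: B_def dest!: spec[of _ 0])
    with mpt.key[OF mpt g neg] show False by blast
  qed
  then have "measure M B \<le> 0" using coreP Bm unfolding in_core_def by metis
  then have "measure M B = 0" by (simp add: measure_nonneg antisym)
  then have "B \<in> null_sets M" using Bm by (simp add: P.emeasure_eq_measure null_sets_def)
  then show ?thesis unfolding B_def[symmetric] by (rule AE_not_in)
qed




lemma conv_real:
  fixes s :: "nat \<Rightarrow> real"
  assumes up: "\<forall>m::nat. \<exists>K. \<forall>n. s n - real n * (c + inverse (real (Suc m))) \<le> K"
    and lo: "\<forall>m::nat. \<exists>K. \<forall>n. real n * (c - inverse (real (Suc m))) - s n \<le> K"
  shows "(\<lambda>n. s n / real n) \<longlonglongrightarrow> c"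
proof (rule LIMSEQ_I)
  fix r :: real assume r: "0 < r"
  obtain k :: nat where k: "k > 0" "inverse (real k) < r / 2"
    using ex_inverse_of_nat_less[of "r/2"] r by auto
  then obtain m where m: "k = Suc m" by (cases k) auto
  define \<epsilon> where "\<epsilon> = inverse (real (Suc m))"
  have e: "\<epsilon> < r / 2" "0 < \<epsilon>" using k m by (auto simp: \<epsilon>_def)
  obtain K1 where K1: "\<And>n. s n - real n * (c + \<epsilon>) \<le> K1" using up \<epsilon>_def by blast
  obtain K2 where K2: "\<And>n. real n * (c - \<epsilon>) - s n \<le> K2" using lo \<epsilon>_def by blast
  define K where "K = max (max K1 K2) 1"
  have Kp: "0 < K" "K1 \<le> K" "K2 \<le> K" by (auto simp: K_def)
  obtain no :: nat where no: "2 * K / r < real no" using reals_Archimedean2 by blast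
  show "\<exists>no. \<forall>n\<ge>no. norm (s n / real n - c) < r"
  proof (intro exI allI impI)
    fix n assume n: "no \<le> n"
    have "0 \<le> 2 * K / r" using Kp r by simp
    then have np: "0 < real n" using no n by linarith
    have "2 * K / r < real n" using no n by linarith
    then have "2 * K < r * real n" using r by (simp add: pos_divide_less_eq mult.commute)
    then have Kn: "K / real n < r / 2" using np by (simp add: pos_divide_less_eq)
    have a: "s n / real n - c - \<epsilon> = (s n - real n * (c + \<epsilon>)) / real n"
      using np by (simp add: field_simps)
    have b: "c - \<epsilon> - s n / real n = (real n * (c - \<epsilon>) - s n) / real n"
      using np by (simp add: field_simps)
    have "(s n - real n * (c + \<epsilon>)) / real n \<le> K / real n"
      using K1[of n] Kp np by (intro divide_right_mono) auto
    moreover have "(real n * (c - \<epsilon>) - s n) / real n \<le> K / real n"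
      using K2[of n] Kp np by (intro divide_right_mono) auto
    ultimately show "norm (s n / real n - c) < r"
      unfolding real_norm_def abs_less_iff using a b Kn e by linarith
  qed
qed

lemma conv_lemma:
  assumes PM: "prob_space M" and Tm: "T \<in> measurable M M"
    and erg: "ergodic_capacity M T V" and coreP: "in_core M V M"
    and mpt: "mpt Q T" and sQ: "sets Q = sets M" and coreQ: "in_core M V Q"
    and f: "integrable Q f"
  shows "AE \<omega> in M. (\<lambda>n. (\<Sum>i<n. f ((T ^^ i) \<omega>)) / real n) \<longlonglongrightarrow> integral\<^sup>L Q f"
proof -
  interpret Q: prob_space Q using mpt mpt.prob by blast
  define c where "c = integral\<^sup>L Q f"
  define g1 where "g1 m x = f x - (c + inverse (real (Suc m)))" for m x
  define g2 where "g2 m x = (c - inverse (real (Suc m))) - f x" for m x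
  have i1: "integrable Q (g1 m)" for m unfolding g1_def using f by simp
  have i2: "integrable Q (g2 m)" for m unfolding g2_def using f by simp
  have n1: "integral\<^sup>L Q (g1 m) < 0" for m unfolding g1_def using f by (simp add: c_def Q.prob_space)
  have n2: "integral\<^sup>L Q (g2 m) < 0" for m unfolding g2_def using f by (simp add: c_def Q.prob_space)
  have bs1: "bsum T (g1 m) n \<omega> = bsum T f n \<omega> - real n * (c + inverse (real (Suc m)))" for m n \<omega>
    unfolding bsum_def g1_def by (simp add: sum_subtractf)
  have bs2: "bsum T (g2 m) n \<omega> = real n * (c - inverse (real (Suc m))) - bsum T f n \<omega>" for m n \<omega>
    unfolding bsum_def g2_def by (simp add: sum_subtractf)
  have "AE \<omega> in M. \<forall>m. \<omega> \<notin> {\<omega>\<in>space M. \<forall>k::nat. \<exists>n. bsum T (g1 m) n \<omega> > real k}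
                    \<and> \<omega> \<notin> {\<omega>\<in>space M. \<forall>k::nat. \<exists>n. bsum T (g2 m) n \<omega> > real k}"
    unfolding AE_all_countable
    using null_lemma[OF PM Tm erg coreP mpt sQ coreQ i1 n1] null_lemma[OF PM Tm erg coreP mpt sQ coreQ i2 n2]
    by (auto intro: AE_conjI)
  moreover have "AE \<omega> in M. \<omega> \<in> space M" by simp
  ultimately show ?thesis
  proof eventually_elim
    case (elim \<omega>)
    have up: "\<forall>m::nat. \<exists>K. \<forall>n. bsum T f n \<omega> - real n * (c + inverse (real (Suc m))) \<le> K"
    proof
      fix m
      from elim obtain k :: nat where "\<forall>n. \<not> bsum T (g1 m) n \<omega> > real k" by blast
      then show "\<exists>K. \<forall>n. bsum T f n \<omega> - real n * (c + inverse (real (Suc m))) \<le> K"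
        by (intro exI[of _ "real k"]) (auto simp: bs1 not_less)
    qed
    have lo: "\<forall>m::nat. \<exists>K. \<forall>n. real n * (c - inverse (real (Suc m))) - bsum T f n \<omega> \<le> K"
    proof
      fix m
      from elim obtain k :: nat where "\<forall>n. \<not> bsum T (g2 m) n \<omega> > real k" by blast
      then show "\<exists>K. \<forall>n. real n * (c - inverse (real (Suc m))) - bsum T f n \<omega> \<le> K"
        by (intro exI[of _ "real k"]) (auto simp: bs2 not_less)
    qed
    show ?case using conv_real[OF up lo] by (simp add: bsum_def c_def)
  qed
qed



lemma ne_of_mem: "x \<in> S \<Longrightarrow> S \<noteq> {}" by blast


lemma closed_le_coord: "closed {\<psi>::'b \<Rightarrow> real. \<psi> A \<le> c}"
  by (rule closed_Collect_le) (auto intro: continuous_on_product_coordinates continuous_on_const)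

lemma closed_ge_coord: "closed {\<psi>::'b \<Rightarrow> real. c \<le> \<psi> A}"
  by (rule closed_Collect_le) (auto intro: continuous_on_product_coordinates continuous_on_const)

lemma closed_eq_coord: "closed {\<psi>::'b \<Rightarrow> real. \<psi> A = c}"
  by (rule closed_Collect_eq) (auto intro: continuous_on_product_coordinates continuous_on_const)

lemma closed_add_coord: "closed {\<psi>::'b \<Rightarrow> real. \<psi> X = \<psi> Y + \<psi> Z}"
  by (rule closed_Collect_eq) (auto intro!: continuous_on_add continuous_on_product_coordinates)

lemma closed_absdiff_coord: "closed {\<psi>::'b \<Rightarrow> real. \<bar>\<psi> X - \<psi> Y\<bar> \<le> e}"
  by (rule closed_Collect_le) (auto intro!: continuous_intros continuous_on_product_coordinates)

lemma cluster_closed: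
  assumes "inf (nhds \<phi>) (filtermap R sequentially) \<noteq> bot" "closed C"
    "eventually (\<lambda>n. R n \<in> C) sequentially"
  shows "\<phi> \<in> C"
proof (rule ccontr)
  assume "\<phi> \<notin> C"
  then have 1: "eventually (\<lambda>x. x \<notin> C) (nhds \<phi>)"
    using assms(2) unfolding eventually_nhds by (intro exI[of _ "- C"]) (auto simp: closed_def)
  have 2: "eventually (\<lambda>x. x \<in> C) (filtermap R sequentially)"
    using assms(3) by (simp add: eventually_filtermap)
  have "eventually (\<lambda>x. False) (inf (nhds \<phi>) (filtermap R sequentially))"
    unfolding eventually_inf using 1 2 by blast
  then show False using assms(1) by (simp add: eventually_False)
qed

lemma V_cont:
  assumes up: "upper_probability M V" and A: "range A \<subseteq> sets M" "decseq A" "(\<Inter>i. A i) = {}"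
  shows "(\<lambda>i. V (A i)) \<longlonglongrightarrow> 0"
proof -
  obtain \<Lambda> :: "'a measure set" where L0: "\<Lambda> \<noteq> {} \<and>
    (\<forall>P'\<in>\<Lambda>. prob_space P' \<and> sets P' = sets M) \<and>
    compact ((\<lambda>P' A. measure P' A) ` \<Lambda>) \<and>
    (\<forall>A\<in>sets M. \<exists>P'\<in>\<Lambda>. V A = measure P' A \<and> (\<forall>P''\<in>\<Lambda>. measure P'' A \<le> V A))"
    using up unfolding upper_probability_def by (elim conjE exE) (rule that, intro conjI, assumption+)
  note L = L0[THEN conjunct1] L0[THEN conjunct2, THEN conjunct1] L0[THEN conjunct2, THEN conjunct2, THEN conjunct1]
    L0[THEN conjunct2, THEN conjunct2, THEN conjunct2]
  have cap: "capacity M V" using up unfolding upper_probability_def by blast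
  have Vnn: "0 \<le> V X" if "X \<in> sets M" for X
    using L(4) that measure_nonneg by fastforce
  have Vmono: "V X \<le> V Y" if "X \<in> sets M" "Y \<in> sets M" "X \<subseteq> Y" for X Y
    using cap that unfolding capacity_def by blast
  have Am: "A n \<in> sets M" for n using A(1) by auto
  have dec: "m \<le> n \<Longrightarrow> A n \<subseteq> A m" for m n using A(2) by (simp add: decseq_def)
  have small: "\<exists>n. V (A n) < \<epsilon>" if e: "0 < \<epsilon>" for \<epsilon>
  proof (rule ccontr)
    assume "\<not> (\<exists>n. V (A n) < \<epsilon>)"
    then have big: "\<epsilon> \<le> V (A n)" for n by (simp add: not_less)
    define C where "C n = {\<psi>::'a set \<Rightarrow> real. \<epsilon> \<le> \<psi> (A n)}" for n
    have "(\<lambda>P' A. measure P' A) ` \<Lambda> \<inter> \<Inter>(range C) \<noteq> {}"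
    proof (rule compact_imp_fip[OF L(3)])
      show "closed T" if "T \<in> range C" for T using that by (auto simp: C_def closed_ge_coord)
      fix F' assume F': "finite F'" "F' \<subseteq> range C"
      then obtain I where I: "finite I" "F' = C ` I" by (meson finite_subset_image)
      obtain N where N: "\<forall>i\<in>I. i \<le> N" using I(1) finite_nat_iff_bounded_le by auto
      obtain P' where P': "P' \<in> \<Lambda>" "V (A N) = measure P' (A N)" using L(4) Am by blast
      interpret P': prob_space P' using L(2) P' by blast
      have sP': "sets P' = sets M" using L(2) P' by blast
      have "measure P' \<in> C i" if "i \<in> I" for i
      proof -
        have "measure P' (A N) \<le> measure P' (A i)"
          using N that dec Am sP' by (intro P'.finite_measure_mono) auto
        then show ?thesis using big[of N] P' by (simp add: C_def)
      qed
      moreover have "measure P' \<in> (\<lambda>P' A. measure P' A) ` \<Lambda>" using P'(1) by (rule rev_image_eqI) simp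
      ultimately have "measure P' \<in> (\<lambda>P' A. measure P' A) ` \<Lambda> \<inter> \<Inter>F'" using I by blast
      then show "(\<lambda>P' A. measure P' A) ` \<Lambda> \<inter> \<Inter>F' \<noteq> {}" by (rule ne_of_mem)
    qed
    then obtain P'' where P'': "P'' \<in> \<Lambda>" "\<And>n. \<epsilon> \<le> measure P'' (A n)"
      by (auto simp: C_def)
    interpret P'': prob_space P'' using L(2) P'' by blast
    have sP'': "sets P'' = sets M" using L(2) P'' by blast
    have "(\<lambda>n. measure P'' (A n)) \<longlonglongrightarrow> measure P'' (\<Inter>i. A i)"
      using A sP'' by (intro P''.finite_Lim_measure_decseq) auto
    then have "\<epsilon> \<le> measure P'' (\<Inter>i. A i)"
      using P''(2) by (intro LIMSEQ_le_const) auto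
    then show False using A(3) e by simp
  qed
  show ?thesis
  proof (rule LIMSEQ_I)
    fix r :: real assume "0 < r"
    then obtain n0 where n0: "V (A n0) < r" using small by blast
    show "\<exists>no. \<forall>n\<ge>no. norm (V (A n) - 0) < r"
    proof (intro exI allI impI)
      fix n assume nn: "n0 \<le> n"
      have "V (A n) \<le> V (A n0)" by (rule Vmono[OF Am[of n] Am[of n0] dec[OF nn]])
      then show "norm (V (A n) - 0) < r" using n0 Vnn[OF Am[of n]] by simp
    qed
  qed
qed




lemma compact_unit_cube: "compact (PiE (UNIV :: 'b set) (\<lambda>_. {0..1::real}))"
proof -
  have "compactin (product_topology (\<lambda>_. euclidean) (UNIV :: 'b set)) (PiE UNIV (\<lambda>_. {0..1::real}))"
    by (simp add: compactin_PiE)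
  then show ?thesis by (simp add: euclidean_product_topology)
qed

lemma exists_Q:
  assumes PM: "prob_space M" and Tm: "T \<in> measurable M M" and up: "upper_probability M V"
    and inv: "T_invariant_capacity M T V" and coreP: "in_core M V M"
  shows "\<exists>Q. mpt Q T \<and> sets Q = sets M \<and> in_core M V Q \<and>
             (\<forall>A\<in>sets M. measure Q (T -` A \<inter> space M) = measure Q A)"
proof -
  interpret P: prob_space M by fact
  have Tsp: "x \<in> space M \<Longrightarrow> T x \<in> space M" for x using Tm by (meson measurable_space)
  have Tnsp: "x \<in> space M \<Longrightarrow> (T ^^ i) x \<in> space M" for x i
    using measurable_compose_n[OF Tm] by (meson measurable_space)
  have pre: "(T ^^ i) -` A \<inter> space M \<in> sets M" if "A \<in> sets M" for i A
    using measurable_sets[OF measurable_compose_n[OF Tm] that] .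
  have preSuc: "(T ^^ Suc i) -` A \<inter> space M = T -` ((T ^^ i) -` A \<inter> space M) \<inter> space M" for i A
    using Tsp by (auto simp: funpow_Suc_right simp del: funpow.simps)
  have preSuc2: "(T ^^ i) -` (T -` A \<inter> space M) \<inter> space M = (T ^^ Suc i) -` A \<inter> space M" for i A
    using Tnsp by auto
  have Vpre: "V ((T ^^ i) -` A \<inter> space M) = V A" if "A \<in> sets M" for i A
  proof (induction i)
    case 0 then show ?case using sets.Int_space_eq2[OF that] by simp
  next
    case (Suc i)
    have "V (T -` ((T ^^ i) -` A \<inter> space M) \<inter> space M) = V ((T ^^ i) -` A \<inter> space M)"
      using inv pre[OF that, of i] unfolding T_invariant_capacity_def by blast
    then show ?case unfolding preSuc using Suc.IH by simp
  qed
  define R where "R n A = (\<Sum>i\<le>n. measure M ((T ^^ i) -` A \<inter> space M)) / real (Suc n)" for n A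
  have R01: "R n A \<in> {0..1}" for n A
  proof -
    have "(\<Sum>i\<le>n. measure M ((T ^^ i) -` A \<inter> space M)) \<le> real (card {..n}) * 1"
      by (intro sum_bounded_above) simp
    moreover have "0 \<le> (\<Sum>i\<le>n. measure M ((T ^^ i) -` A \<inter> space M))"
      by (intro sum_nonneg) simp
    ultimately show ?thesis by (simp add: R_def)
  qed
  have RV: "R n A \<le> V A" if "A \<in> sets M" for n A
  proof -
    have "(\<Sum>i\<le>n. measure M ((T ^^ i) -` A \<inter> space M)) \<le> real (card {..n}) * V A"
      using coreP pre[OF that] Vpre[OF that] unfolding in_core_def by (intro sum_bounded_above) metis
    then show ?thesis by (simp add: R_def divide_le_eq mult.commute)
  qed
  have Rsp: "R n (space M) = 1" for n
  proof -
    have "(T ^^ i) -` space M \<inter> space M = space M" for i using Tnsp by auto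
    then show ?thesis by (simp add: R_def P.prob_space)
  qed
  have Radd: "R n (A \<union> B) = R n A + R n B" if "A \<in> sets M" "B \<in> sets M" "A \<inter> B = {}" for n A B
  proof -
    have "measure M ((T ^^ i) -` (A \<union> B) \<inter> space M) =
          measure M ((T ^^ i) -` A \<inter> space M) + measure M ((T ^^ i) -` B \<inter> space M)" for i
    proof -
      have "(T ^^ i) -` (A \<union> B) \<inter> space M = ((T ^^ i) -` A \<inter> space M) \<union> ((T ^^ i) -` B \<inter> space M)" by auto
      then show ?thesis using pre[OF that(1), of i] pre[OF that(2), of i] that(3)
        by (simp add: P.finite_measure_Union disjoint_iff)
    qed
    then show ?thesis by (simp add: R_def sum.distrib add_divide_distrib)
  qed
  have Rshift: "\<bar>R n (T -` A \<inter> space M) - R n A\<bar> \<le> 1 / real (Suc n)" if "A \<in> sets M" for n A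
  proof -
    define a where "a i = measure M ((T ^^ i) -` A \<inter> space M)" for i
    have "R n (T -` A \<inter> space M) - R n A = (\<Sum>i<Suc n. a (Suc i) - a i) / real (Suc n)"
      unfolding R_def preSuc2 a_def[symmetric] lessThan_Suc_atMost sum_subtractf
      by (simp add: diff_divide_distrib)
    also have "\<dots> = (a (Suc n) - a 0) / real (Suc n)" by (simp only: sum_lessThan_telescope)
    finally have eq: "R n (T -` A \<inter> space M) - R n A = (a (Suc n) - a 0) / real (Suc n)" .
    have "\<bar>a (Suc n) - a 0\<bar> \<le> 1" unfolding a_def
      using P.prob_le_1 measure_nonneg by (smt (verit))
    then show ?thesis unfolding eq by (simp add: divide_right_mono)
  qed
  define S where "S = PiE (UNIV :: 'a set set) (\<lambda>_. {0..1::real})"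
  have cS: "compact S" unfolding S_def by (rule compact_unit_cube)
  have RS: "R n \<in> S" for n using R01 by (simp add: S_def PiE_iff)
  obtain \<phi> where phiS: "\<phi> \<in> S" and clu: "inf (nhds \<phi>) (filtermap R sequentially) \<noteq> bot"
  proof -
    have "filtermap R sequentially \<noteq> bot" by (simp add: filtermap_bot_iff)
    moreover have "eventually (\<lambda>x. x \<in> S) (filtermap R sequentially)"
      by (simp add: eventually_filtermap RS)
    ultimately show ?thesis using cS unfolding compact_filter using that by blast
  qed
  have phi01: "0 \<le> \<phi> A" "\<phi> A \<le> 1" for A using phiS by (auto simp: S_def)
  have phiV: "\<phi> A \<le> V A" if "A \<in> sets M" for A
    using cluster_closed[OF clu closed_le_coord[of A "V A"]] RV[OF that] by simp
  have phisp: "\<phi> (space M) = 1"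
    using cluster_closed[OF clu closed_eq_coord[of "space M" 1]] Rsp by simp
  have phiempty: "\<phi> {} = 0"
    using cluster_closed[OF clu closed_eq_coord[of "{}" 0]] by (simp add: R_def)
  have phiadd: "\<phi> (A \<union> B) = \<phi> A + \<phi> B" if "A \<in> sets M" "B \<in> sets M" "A \<inter> B = {}" for A B
    using cluster_closed[OF clu closed_add_coord[of "A \<union> B" A B]] Radd[OF that] by simp
  have phiinv: "\<phi> (T -` A \<inter> space M) = \<phi> A" if A: "A \<in> sets M" for A
  proof (rule ccontr)
    assume ne: "\<phi> (T -` A \<inter> space M) \<noteq> \<phi> A"
    define e where "e = \<bar>\<phi> (T -` A \<inter> space M) - \<phi> A\<bar> / 2"
    have e: "0 < e" using ne by (simp add: e_def)
    obtain k :: nat where k: "k > 0" "inverse (real k) < e"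
      using ex_inverse_of_nat_less[OF e] by auto
    have "eventually (\<lambda>n. R n \<in> {\<psi>. \<bar>\<psi> (T -` A \<inter> space M) - \<psi> A\<bar> \<le> e}) sequentially"
    proof (rule eventually_sequentiallyI[of k])
      fix n assume "k \<le> n"
      then have "1 / real (Suc n) \<le> inverse (real k)" using k by (simp add: field_simps)
      then show "R n \<in> {\<psi>. \<bar>\<psi> (T -` A \<inter> space M) - \<psi> A\<bar> \<le> e}"
        using Rshift[OF A, of n] k by simp
    qed
    then have "\<bar>\<phi> (T -` A \<inter> space M) - \<phi> A\<bar> \<le> e"
      using cluster_closed[OF clu closed_absdiff_coord] by blast
    then show False using e unfolding e_def by simp
  qed
  define \<mu> where "\<mu> A = ennreal (\<phi> A)" for A
  have pos: "positive (sets M) \<mu>" unfolding positive_def \<mu>_def using phiempty by simp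
  have add: "additive (sets M) \<mu>" unfolding additive_def \<mu>_def
    using phiadd phi01 by (simp add: ennreal_plus)
  have ca: "countably_additive (sets M) \<mu>"
  proof (rule ring_of_sets.empty_continuous_imp_countably_additive[OF _ pos add])
    show "ring_of_sets (space M) (sets M)"
      using sets.sigma_algebra_axioms[of M] unfolding sigma_algebra_def algebra_def by blast
    show "\<forall>A\<in>sets M. \<mu> A \<noteq> \<infinity>" by (simp add: \<mu>_def)
    fix A :: "nat \<Rightarrow> 'a set" assume A: "range A \<subseteq> sets M" "decseq A" "(\<Inter>i. A i) = {}"
    have "(\<lambda>i. \<phi> (A i)) \<longlonglongrightarrow> 0"
    proof (rule tendsto_sandwich[of "\<lambda>_. 0" _ _ "\<lambda>i. V (A i)"])
      show "\<forall>\<^sub>F n in sequentially. 0 \<le> \<phi> (A n)" using phi01 by simp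
      show "\<forall>\<^sub>F n in sequentially. \<phi> (A n) \<le> V (A n)" using phiV A(1) by auto
      show "(\<lambda>i. V (A i)) \<longlonglongrightarrow> 0" by (rule V_cont[OF up A])
    qed simp
    then show "(\<lambda>i. \<mu> (A i)) \<longlonglongrightarrow> 0" unfolding \<mu>_def
      using tendsto_ennrealI by fastforce
  qed
  define Q where "Q = measure_of (space M) (sets M) \<mu>"
  have sQ: "sets Q = sets M" unfolding Q_def
    by (simp add: sets_measure_of[OF sets.space_closed] sets.sigma_sets_eq)
  have spQ: "space Q = space M" unfolding Q_def by (simp add: space_measure_of_conv)
  have emQ: "emeasure Q A = \<mu> A" if "A \<in> sets M" for A
    unfolding Q_def by (rule emeasure_measure_of_sigma[OF sets.sigma_algebra_axioms pos ca that])
  have mQ: "measure Q A = \<phi> A" if "A \<in> sets M" for A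
    using emQ[OF that] phi01[of A] by (simp add: measure_def \<mu>_def)
  have pQ: "prob_space Q"
    by (rule prob_spaceI) (simp add: spQ emQ \<mu>_def phisp)
  have invQ: "\<forall>A\<in>sets M. measure Q (T -` A \<inter> space M) = measure Q A"
  proof
    fix A assume A: "A \<in> sets M"
    have "T -` A \<inter> space M \<in> sets M" using measurable_sets[OF Tm A] .
    then show "measure Q (T -` A \<inter> space M) = measure Q A" using mQ A phiinv by simp
  qed
  have TQ: "T \<in> measurable Q Q" using Tm measurable_cong_sets[OF sQ sQ] by blast
  have "mpt Q T" unfolding mpt_def using pQ TQ invQ sQ spQ by simp
  moreover have "in_core M V Q" unfolding in_core_def using mQ phiV by simp
  ultimately show ?thesis using sQ invQ by blast
qed




theorem corollary3p4:
  fixes M :: "'a measure" and T :: "'a \<Rightarrow> 'a" and V :: "'a set \<Rightarrow> real"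
  assumes "prob_space M"
    and "T \<in> measurable M M"
    and "upper_probability M V"
    and "T_invariant_capacity M T V"
    and "ergodic_capacity M T V"
    and "in_core M V M"
  shows "\<exists>!Q. Q \<in> ergodic_probs M T \<and> in_core M V Q \<and>
           (\<forall>f :: 'a \<Rightarrow> real. integrable Q f \<longrightarrow>
              (AE \<omega> in M. (\<lambda>n. (\<Sum>i<n. f ((T ^^ i) \<omega>)) / real n) \<longlonglongrightarrow> integral\<^sup>L Q f))"
proof -
  interpret P: prob_space M by fact
  obtain Q where Q: "mpt Q T" "sets Q = sets M" "in_core M V Q"
      "\<forall>A\<in>sets M. measure Q (T -` A \<inter> space M) = measure Q A"
    using exists_Q[OF assms(1,2,3,4,6)] by blast
  interpret Qp: prob_space Q using Q(1) mpt.prob by blast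
  have spQ: "space Q = space M" using Q(2) by (rule sets_eq_imp_space_eq)
  have ergQ: "Q \<in> ergodic_probs M T"
    unfolding ergodic_probs_def
  proof (intro CollectI conjI ballI)
    show "prob_space Q" by (rule Qp.prob_space_axioms)
    show "sets Q = sets M" by (rule Q(2))
    show "measure Q (T -` A \<inter> space M) = measure Q A" if "A \<in> sets M" for A using Q(4) that by blast
    fix B assume B: "B \<in> invariant_sets M T"
    then have Bm: "B \<in> sets M" by (simp add: invariant_sets_def)
    have "V B = 0 \<or> V (space M - B) = 0" using assms(5) B unfolding ergodic_capacity_def by blast
    then show "measure Q B = 0 \<or> measure Q B = 1"
    proof
      assume "V B = 0"
      then have "measure Q B \<le> 0" using Q(3) Bm unfolding in_core_def by metis
      then show ?thesis by (simp add: measure_nonneg antisym)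
    next
      assume "V (space M - B) = 0"
      moreover have "space M - B \<in> sets M" using Bm by auto
      ultimately have "measure Q (space M - B) \<le> 0" using Q(3) unfolding in_core_def by metis
      then have "measure Q (space Q - B) = 0" using spQ by (simp add: measure_nonneg antisym)
      then show ?thesis using Qp.prob_compl[of B] Bm Q(2) by simp
    qed
  qed
  have convQ: "\<forall>f :: 'a \<Rightarrow> real. integrable Q f \<longrightarrow>
              (AE \<omega> in M. (\<lambda>n. (\<Sum>i<n. f ((T ^^ i) \<omega>)) / real n) \<longlonglongrightarrow> integral\<^sup>L Q f)"
    using conv_lemma[OF assms(1,2,5,6) Q(1,2,3)] by blast
  show ?thesis
  proof (rule ex1I[of _ Q])
    show "Q \<in> ergodic_probs M T \<and> in_core M V Q \<and> (\<forall>f :: 'a \<Rightarrow> real. integrable Q f \<longrightarrow>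
              (AE \<omega> in M. (\<lambda>n. (\<Sum>i<n. f ((T ^^ i) \<omega>)) / real n) \<longlonglongrightarrow> integral\<^sup>L Q f))"
      using ergQ Q(3) convQ by blast
    fix Q' assume Q': "Q' \<in> ergodic_probs M T \<and> in_core M V Q' \<and> (\<forall>f :: 'a \<Rightarrow> real. integrable Q' f \<longrightarrow>
              (AE \<omega> in M. (\<lambda>n. (\<Sum>i<n. f ((T ^^ i) \<omega>)) / real n) \<longlonglongrightarrow> integral\<^sup>L Q' f))"
    then have pQ': "prob_space Q'" and sQ': "sets Q' = sets M" by (auto simp: ergodic_probs_def)
    interpret Q'p: prob_space Q' by fact
    show "Q' = Q"
    proof (rule measure_eqI)
      show "sets Q' = sets Q" using sQ' Q(2) by simp
      fix A assume "A \<in> sets Q'"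
      then have A: "A \<in> sets M" using sQ' by simp
      define f :: "'a \<Rightarrow> real" where "f = indicator A"
      have i1: "integrable Q f"
      proof -
        have "integrable Q (\<lambda>x. indicator A x *\<^sub>R (1::real))"
          using A Q(2) by (intro Bochner_Integration.integrable_indicator) (auto simp: less_top[symmetric])
        then show ?thesis unfolding f_def by simp
      qed
      have i2: "integrable Q' f"
      proof -
        have "integrable Q' (\<lambda>x. indicator A x *\<^sub>R (1::real))"
          using A sQ' by (intro Bochner_Integration.integrable_indicator) (auto simp: less_top[symmetric])
        then show ?thesis unfolding f_def by simp
      qed
      have e1: "integral\<^sup>L Q f = measure Q A" unfolding f_def Bochner_Integration.integral_indicator
        using A Q(2) by (simp add: sets.Int_space_eq2 spQ)
      have e2: "integral\<^sup>L Q' f = measure Q' A" unfolding f_def Bochner_Integration.integral_indicator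
        using A sQ' sets_eq_imp_space_eq[OF sQ'] by (simp add: sets.Int_space_eq2)
      have "AE \<omega> in M. (\<lambda>n. (\<Sum>i<n. f ((T ^^ i) \<omega>)) / real n) \<longlonglongrightarrow> measure Q A"
        using convQ i1 unfolding e1[symmetric] by blast
      moreover have "AE \<omega> in M. (\<lambda>n. (\<Sum>i<n. f ((T ^^ i) \<omega>)) / real n) \<longlonglongrightarrow> measure Q' A"
        using Q' i2 unfolding e2[symmetric] by blast
      ultimately have "AE \<omega> in M. measure Q A = measure Q' A"
        by eventually_elim (rule LIMSEQ_unique)
      then have "measure Q A = measure Q' A" using P.AE_False by (cases "measure Q A = measure Q' A") auto
      then show "emeasure Q' A = emeasure Q A"
        using A Q(2) sQ' by (simp add: Qp.emeasure_eq_measure Q'p.emeasure_eq_measure)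
    qed
  qed
qed


end
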